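(* Fix a constant $\epsilon>0$. There exists a constant $A>0$ (depending only on $\epsilon$) such that for all integers $1 \le k \le d$, the Local Search algorithm with parameter $\epsilon$ (defined in the context), viewed as a map $c$ sending each finite point set $P\subset\mathbb{R}^d$ to its output $c(P)$, is an $(Ak)^{2k}$-composable core-set of size $k$ for the determinant maximization problem with parameter $k$. That is, $|c(P)|\le k$ for every $P$, and for every integer $m\ge1$ and all finite point sets $P_1,\dots,P_m\subset\mathbb{R}^d$, $$\mathrm{MAXDET}_k\Big(\bigcup_{i=1}^m c(P_i)\Big)\ge \frac{1}{(Ak)^{2k}}\,\mathrm{MAXDET}_k\Big(\bigcup_{i=1}^m P_i\Big).$$
   Context: For a finite set $S\subset\mathbb{R}^d$ with $|S|=j$, $\mathrm{VOL}(S)$ denotes the $j$-dimensional volume of the parallelepiped spanned by the vectors of $S$; if $M_S$ is the $j\times d$ matrix whose rows are the points of $S$, then $\det(M_SM_S^\top)=\mathrm{VOL}(S)^2$. For finite $P\subset\mathbb{R}^d$, $\mathrm{MAXDET}_k(P)=\max_{S\subseteq P,\,|S|=k}\det(M_SM_S^\top)$. For a set $\mathcal{C}$ and points $p,q$, $\mathcal{C}+q-p$ denotes $(\mathcal{C}\setminus\{p\})\cup\{q\}$. The Local Search algorithm on input $P$, $k$, $\epsilon$: initialize $\mathcal{C}=\emptyset$; for $i=1,\dots,k$ add to $\mathcal{C}$ a point $\arg\max_{p\in P\setminus\mathcal{C}}\mathrm{VOL}(\mathcal{C}\cup\{p\})$; then repeat: if there are $q\in P\setminus\mathcal{C}$ and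 $p\in\mathcal{C}$ with $\mathrm{VOL}(\mathcal{C}+q-p)\ge(1+\epsilon)\mathrm{VOL}(\mathcal{C})$, replace $p$ by $q$; until no such pair exists; output $\mathcal{C}$. A map $c$ from point sets to subsets of themselves is an $\alpha$-composable core-set for determinant maximization if the displayed inequality (with $\alpha$ in place of $(Ak)^{2k}$) holds for every collection $P_1,\dots,P_m$; it has size $t$ if $|c(P)|\le t$ for all $P$. *)

theory Defs
  imports Complex_Main "HOL-Combinatorics.Permutations"
begin

text \<open>Points of R^d are represented as functions nat => real vanishing at
  all coordinates >= d (so that d can be quantified inside the statement).\<close>

definition Rd :: "nat \<Rightarrow> (nat \<Rightarrow> real) set" where
  "Rd d = {x. \<forall>i\<ge>d. x i = 0}"

definition dotd :: "nat \<Rightarrow> (nat \<Rightarrow> real) \<Rightarrow> (nat \<Rightarrow> real) \<Rightarrow> real" where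
  "dotd d x y = (\<Sum>i<d. x i * y i)"

text \<open>det(M_S M_S^T): Leibniz expansion of the determinant of the Gram
  matrix of S, rows and columns indexed by the elements of S.\<close>
definition gram_det :: "nat \<Rightarrow> (nat \<Rightarrow> real) set \<Rightarrow> real" where
  "gram_det d S = (\<Sum>p\<in>{p. p permutes S}. of_int (sign p) * (\<Prod>s\<in>S. dotd d s (p s)))"

definition VOL :: "nat \<Rightarrow> (nat \<Rightarrow> real) set \<Rightarrow> real" where
  "VOL d S = sqrt (gram_det d S)"

definition MAXDET :: "nat \<Rightarrow> nat \<Rightarrow> (nat \<Rightarrow> real) set \<Rightarrow> real" where
  "MAXDET d k P =
     (if \<exists>S. S \<subseteq> P \<and> card S = k
      then Max {gram_det d S | S. S \<subseteq> P \<and> card S = k} else 0)"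

definition greedy_step :: "nat \<Rightarrow> (nat \<Rightarrow> real) set \<Rightarrow> (nat \<Rightarrow> real) set \<Rightarrow> (nat \<Rightarrow> real) set \<Rightarrow> bool" where
  "greedy_step d P C C' \<longleftrightarrow>
     (\<exists>p\<in>P - C. (\<forall>q\<in>P - C. VOL d (insert q C) \<le> VOL d (insert p C)) \<and> C' = insert p C)"

definition swap_step :: "nat \<Rightarrow> (nat \<Rightarrow> real) set \<Rightarrow> real \<Rightarrow> (nat \<Rightarrow> real) set \<Rightarrow> (nat \<Rightarrow> real) set \<Rightarrow> bool" where
  "swap_step d P eps C C' \<longleftrightarrow>
     (\<exists>q\<in>P - C. \<exists>p\<in>C. C' = insert q (C - {p}) \<and> VOL d C' \<ge> (1 + eps) * VOL d C)"

definition LS_output :: "nat \<Rightarrow> (nat \<Rightarrow> real) set \<Rightarrow> nat \<Rightarrow> real \<Rightarrow> (nat \<Rightarrow> real) set \<Rightarrow> bool" where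
  "LS_output d P k eps C \<longleftrightarrow>
     (\<exists>C0. (greedy_step d P ^^ k) {} C0 \<and> (swap_step d P eps)\<^sup>*\<^sup>* C0 C
           \<and> \<not> (\<exists>C'. swap_step d P eps C C'))"

end

theory Submission
  imports Defs "HOL-Analysis.L2_Norm"
begin

lemma dotd_sym: "dotd d x y = dotd d y x"
  unfolding dotd_def by (simp add: mult.commute)

definition D :: "nat \<Rightarrow> 'a set \<Rightarrow> ('a \<Rightarrow> nat \<Rightarrow> real) \<Rightarrow> ('a \<Rightarrow> nat \<Rightarrow> real) \<Rightarrow> real" where
  "D d I u w = (\<Sum>p\<in>{p. p permutes I}. of_int (sign p) * (\<Prod>i\<in>I. dotd d (u i) (w (p i))))"

lemma gram_D: "gram_det d S = D d S id id"
  unfolding gram_det_def D_def by simp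

lemma D_cong:
  assumes "\<And>i. i \<in> I \<Longrightarrow> u i = u' i" "\<And>i. i \<in> I \<Longrightarrow> w i = w' i"
  shows "D d I u w = D d I u' w'"
  unfolding D_def
proof (rule sum.cong[OF refl])
  fix p assume "p \<in> {p. p permutes I}"
  then have "p permutes I" by simp
  then have "\<And>i. i \<in> I \<Longrightarrow> p i \<in> I" by (simp add: permutes_in_image)
  then show "of_int (sign p) * (\<Prod>i\<in>I. dotd d (u i) (w (p i))) =
        of_int (sign p) * (\<Prod>i\<in>I. dotd d (u' i) (w' (p i)))"
    using assms by (metis (no_types, lifting) prod.cong)
qed

lemma D_transpose:
  assumes "finite I"
  shows "D d I u w = D d I w u"
proof -
  have "D d I u w = (\<Sum>p\<in>{p. p permutes I}. of_int (sign (inv p)) * (\<Prod>i\<in>I. dotd d (u i) (w (inv p i))))"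
    unfolding D_def by (rule sum_permutations_inverse)
  also have "\<dots> = (\<Sum>p\<in>{p. p permutes I}. of_int (sign p) * (\<Prod>i\<in>I. dotd d (w i) (u (p i))))"
  proof (rule sum.cong[OF refl])
    fix p assume "p \<in> {p. p permutes I}"
    then have p: "p permutes I" by simp
    have "sign (inv p) = sign p"
      using p assms by (simp add: sign_inverse permutes_imp_permutation)
    moreover have "(\<Prod>i\<in>I. dotd d (u i) (w (inv p i))) = (\<Prod>i\<in>I. dotd d (u (p i)) (w i))"
      using prod.permutes_inv[OF p, of "\<lambda>a b. dotd d (u a) (w b)"] by simp
    ultimately show "of_int (sign (inv p)) * (\<Prod>i\<in>I. dotd d (u i) (w (inv p i))) =
          of_int (sign p) * (\<Prod>i\<in>I. dotd d (w i) (u (p i)))"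
      by (simp add: dotd_sym)
  qed
  finally show ?thesis unfolding D_def .
qed

lemma dotd_sum_left: "dotd d (\<lambda>n. \<Sum>t\<in>T. c t * v t n) z = (\<Sum>t\<in>T. c t * dotd d (v t) z)"
  unfolding dotd_def by (simp add: sum_distrib_right sum_distrib_left mult.assoc sum.swap[of _ T])

lemma D_lin_row:
  assumes "finite I" "j \<in> I"
  shows "D d I (u(j := (\<lambda>n. \<Sum>t\<in>T. c t * v t n))) w = (\<Sum>t\<in>T. c t * D d I (u(j := v t)) w)"
proof -
  have split: "\<And>f. (\<Prod>i\<in>I. f i) = f j * (\<Prod>i\<in>I-{j}. f i)"
    using assms by (simp add: prod.remove)
  have "D d I (u(j := (\<lambda>n. \<Sum>t\<in>T. c t * v t n))) w =
    (\<Sum>p\<in>{p. p permutes I}. \<Sum>t\<in>T. c t * (of_int (sign p) * (dotd d (v t) (w (p j)) * (\<Prod>i\<in>I-{j}. dotd d (u i) (w (p i))))))"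
    unfolding D_def
    apply (rule sum.cong[OF refl])
    apply (subst split)
    apply (simp add: dotd_sum_left sum_distrib_left sum_distrib_right)
    apply (rule sum.cong[OF refl])
    apply simp
    done
  also have "\<dots> = (\<Sum>t\<in>T. c t * D d I (u(j := v t)) w)"
    unfolding D_def
    apply (subst sum.swap)
    apply (rule sum.cong[OF refl])
    apply (simp add: sum_distrib_left)
    apply (rule sum.cong[OF refl])
    apply (subst split)
    apply simp
    done
  finally show ?thesis .
qed

lemma D_alt:
  assumes "finite I" "j \<in> I" "k \<in> I" "j \<noteq> k" "u j = u k"
  shows "D d I u w = 0"
proof -
  let ?t = "transpose j k"
  have tp: "?t permutes I" using assms by (simp add: permutes_swap_id)
  have ut: "\<And>i. u (?t i) = u i" using assms(5) by (simp add: transpose_def)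
  have "D d I u w = (\<Sum>p\<in>{p. p permutes I}. of_int (sign (p \<circ> ?t)) * (\<Prod>i\<in>I. dotd d (u i) (w ((p \<circ> ?t) i))))"
    unfolding D_def by (rule sum_permutations_compose_right[OF tp])
  also have "\<dots> = (\<Sum>p\<in>{p. p permutes I}. - (of_int (sign p) * (\<Prod>i\<in>I. dotd d (u i) (w (p i)))))"
  proof (rule sum.cong[OF refl])
    fix p assume "p \<in> {p. p permutes I}"
    then have p: "p permutes I" by simp
    have "sign (p \<circ> ?t) = - sign p"
      using p tp assms by (simp add: sign_compose permutes_imp_permutation sign_swap_id)
    moreover have "(\<Prod>i\<in>I. dotd d (u i) (w ((p \<circ> ?t) i))) = (\<Prod>i\<in>I. dotd d (u i) (w (p i)))"
    proof -
      have "(\<Prod>i\<in>I. dotd d (u i) (w ((p \<circ> ?t) i))) = (\<Prod>i\<in>I. dotd d (u (?t i)) (w ((p \<circ> ?t) (?t i))))"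
        using prod.reindex_bij_betw[OF permutes_imp_bij[OF tp], of "\<lambda>i. dotd d (u i) (w ((p \<circ> ?t) i))"]
        by simp
      also have "\<dots> = (\<Prod>i\<in>I. dotd d (u i) (w (p i)))" by (simp add: ut)
      finally show ?thesis .
    qed
    ultimately show "of_int (sign (p \<circ> ?t)) * (\<Prod>i\<in>I. dotd d (u i) (w ((p \<circ> ?t) i))) =
       - (of_int (sign p) * (\<Prod>i\<in>I. dotd d (u i) (w (p i))))" by simp
  qed
  also have "\<dots> = - D d I u w" unfolding D_def by (simp add: sum_negf)
  finally show ?thesis by simp
qed

lemma permutes_remove_iff:
  assumes "j \<in> I"
  shows "p permutes (I - {j}) \<longleftrightarrow> p permutes I \<and> p j = j"
proof
  assume "p permutes (I - {j})"
  then show "p permutes I \<and> p j = j"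
    by (meson Diff_subset permutes_subset permutes_not_in Diff_iff singletonI)
next
  assume a: "p permutes I \<and> p j = j"
  then show "p permutes (I - {j})"
    unfolding permutes_def by (metis Diff_iff singletonD)
qed

lemma D_block:
  assumes "finite I" "j \<in> I" "\<And>i. i \<in> I - {j} \<Longrightarrow> dotd d (u j) (w i) = 0"
  shows "D d I u w = dotd d (u j) (w j) * D d (I - {j}) u w"
proof -
  let ?f = "\<lambda>p. of_int (sign p) * (\<Prod>i\<in>I. dotd d (u i) (w (p i)))"
  have "D d I u w = sum ?f {p. p permutes I \<and> p j = j}"
    unfolding D_def
  proof (rule sum.mono_neutral_right)
    show "finite {p. p permutes I}" using assms by (simp add: finite_permutations)
    show "{p. p permutes I \<and> p j = j} \<subseteq> {p. p permutes I}" by auto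
    show "\<forall>p\<in>{p. p permutes I} - {p. p permutes I \<and> p j = j}. ?f p = 0"
    proof
      fix p assume "p \<in> {p. p permutes I} - {p. p permutes I \<and> p j = j}"
      then have p: "p permutes I" "p j \<noteq> j" by auto
      then have "p j \<in> I - {j}" using assms(2) by (simp add: permutes_in_image)
      then have "dotd d (u j) (w (p j)) = 0" using assms(3) by simp
      then have "(\<Prod>i\<in>I. dotd d (u i) (w (p i))) = 0"
        using assms(1,2) by (intro prod_zero) auto
      then show "?f p = 0" by simp
    qed
  qed
  also have "\<dots> = sum ?f {p. p permutes (I - {j})}"
    using permutes_remove_iff[OF assms(2)] by simp
  also have "\<dots> = (\<Sum>p\<in>{p. p permutes (I - {j})}. dotd d (u j) (w j) * (of_int (sign p) * (\<Prod>i\<in>I - {j}. dotd d (u i) (w (p i)))))"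
  proof (rule sum.cong[OF refl])
    fix p assume "p \<in> {p. p permutes (I - {j})}"
    then have "p j = j" using permutes_remove_iff[OF assms(2)] by simp
    then show "?f p = dotd d (u j) (w j) * (of_int (sign p) * (\<Prod>i\<in>I - {j}. dotd d (u i) (w (p i))))"
      using assms(1,2) by (simp add: prod.remove)
  qed
  also have "\<dots> = dotd d (u j) (w j) * D d (I - {j}) u w"
    unfolding D_def by (simp add: sum_distrib_left)
  finally show ?thesis .
qed

definition lc :: "(nat \<Rightarrow> real) set \<Rightarrow> ((nat \<Rightarrow> real) \<Rightarrow> real) \<Rightarrow> nat \<Rightarrow> real" where
  "lc T a = (\<lambda>n. \<Sum>t\<in>T. a t * t n)"

lemma D_row_op:
  assumes "finite T" "x \<notin> T"
  shows "D d (insert x T) (id(x := (\<lambda>n. x n - lc T a n))) w = D d (insert x T) id w"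
proof -
  let ?I = "insert x T"
  let ?c = "\<lambda>t. if t = x then 1 else - a t"
  have r: "(\<lambda>n. x n - lc T a n) = (\<lambda>n. \<Sum>t\<in>?I. ?c t * id t n)"
  proof
    fix n
    have "(\<Sum>t\<in>?I. ?c t * id t n) = x n + (\<Sum>t\<in>T. - a t * t n)"
      using assms by (simp add: sum.insert) (rule sum.cong, auto)
    then show "x n - lc T a n = (\<Sum>t\<in>?I. ?c t * id t n)"
      unfolding lc_def by (simp add: sum_negf)
  qed
  have "D d ?I (id(x := (\<lambda>n. x n - lc T a n))) w = (\<Sum>t\<in>?I. ?c t * D d ?I (id(x := id t)) w)"
    unfolding r using assms by (intro D_lin_row) auto
  also have "\<dots> = D d ?I id w + (\<Sum>t\<in>T. ?c t * D d ?I (id(x := id t)) w)"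
  proof -
    have idx: "id(x := x) = id" by (simp add: fun_eq_iff)
    show ?thesis using assms by (simp add: sum.insert idx)
  qed
  also have "(\<Sum>t\<in>T. ?c t * D d ?I (id(x := id t)) w) = 0"
  proof (rule sum.neutral, rule ballI)
    fix t assume t: "t \<in> T"
    then have "D d ?I (id(x := id t)) w = 0"
      using assms by (intro D_alt[of ?I x t]) auto
    then show "?c t * D d ?I (id(x := id t)) w = 0" by simp
  qed
  finally show ?thesis by (simp only: add_0_right)
qed

lemma gram_insert:
  assumes "finite T" "x \<notin> T" "\<And>t. t \<in> T \<Longrightarrow> dotd d (\<lambda>n. x n - lc T a n) t = 0"
  shows "gram_det d (insert x T) = gram_det d T * dotd d (\<lambda>n. x n - lc T a n) (\<lambda>n. x n - lc T a n)"
proof -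
  let ?I = "insert x T"
  let ?r = "\<lambda>n. x n - lc T a n"
  let ?u = "id(x := ?r)"
  have fI: "finite ?I" using assms by simp
  have "D d ?I ?u ?u = D d ?I id ?u" by (rule D_row_op[OF assms(1,2)])
  also have "\<dots> = D d ?I ?u id" by (rule D_transpose[OF fI])
  also have "\<dots> = D d ?I id id" by (rule D_row_op[OF assms(1,2)])
  finally have 1: "D d ?I ?u ?u = D d ?I id id" .
  have "D d ?I ?u ?u = dotd d (?u x) (?u x) * D d (?I - {x}) ?u ?u"
    using assms by (intro D_block) auto
  also have "?I - {x} = T" using assms by auto
  also have "D d T ?u ?u = D d T id id"
    using assms by (intro D_cong) auto
  finally have "D d ?I ?u ?u = dotd d ?r ?r * D d T id id" by (simp only: fun_upd_same)
  then show ?thesis using 1 unfolding gram_D by (metis mult.commute)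
qed

lemma gram_empty: "gram_det d {} = 1"
  unfolding gram_det_def by simp


definition nrm :: "nat \<Rightarrow> (nat \<Rightarrow> real) \<Rightarrow> real" where
  "nrm d x = sqrt (dotd d x x)"

lemma dotd_self: "dotd d x x = (\<Sum>i<d. (x i)\<^sup>2)"
  unfolding dotd_def by (simp add: power2_eq_square)

lemma dotd_nonneg: "dotd d x x \<ge> 0"
  unfolding dotd_def by (intro sum_nonneg) simp

lemma nrm_L2: "nrm d x = L2_set x {..<d}"
  unfolding nrm_def L2_set_def dotd_self ..

lemma nrm_nonneg: "nrm d x \<ge> 0"
  unfolding nrm_def using dotd_nonneg by simp

lemma nrm_sq: "(nrm d x)\<^sup>2 = dotd d x x"
  unfolding nrm_def using dotd_nonneg by simp

lemma dotd_add_left: "dotd d (\<lambda>n. x n + y n) z = dotd d x z + dotd d y z"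
  unfolding dotd_def by (simp add: algebra_simps sum.distrib)
lemma dotd_diff_left: "dotd d (\<lambda>n. x n - y n) z = dotd d x z - dotd d y z"
  unfolding dotd_def by (simp add: algebra_simps sum_subtractf)
lemma dotd_scale_left: "dotd d (\<lambda>n. c * x n) z = c * dotd d x z"
  unfolding dotd_def by (simp add: algebra_simps sum_distrib_left)
lemma dotd_add_right: "dotd d z (\<lambda>n. x n + y n) = dotd d z x + dotd d z y"
  unfolding dotd_def by (simp add: algebra_simps sum.distrib)
lemma dotd_diff_right: "dotd d z (\<lambda>n. x n - y n) = dotd d z x - dotd d z y"
  unfolding dotd_def by (simp add: algebra_simps sum_subtractf)
lemma dotd_scale_right: "dotd d z (\<lambda>n. c * x n) = c * dotd d z x"
  unfolding dotd_def by (simp add: algebra_simps sum_distrib_left)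
lemma dotd_lc_left: "dotd d (lc T a) z = (\<Sum>t\<in>T. a t * dotd d t z)"
  unfolding lc_def by (rule dotd_sum_left)
lemma dotd_lc_right: "dotd d z (lc T a) = (\<Sum>t\<in>T. a t * dotd d z t)"
proof -
  have "dotd d z (lc T a) = dotd d (lc T a) z" by (rule dotd_sym)
  also have "\<dots> = (\<Sum>t\<in>T. a t * dotd d t z)" by (rule dotd_lc_left)
  also have "\<dots> = (\<Sum>t\<in>T. a t * dotd d z t)" by (simp add: dotd_sym)
  finally show ?thesis .
qed
lemma dotd_sum_right: "dotd d z (\<lambda>n. \<Sum>t\<in>T. c t * v t n) = (\<Sum>t\<in>T. c t * dotd d z (v t))"
proof -
  have "dotd d z (\<lambda>n. \<Sum>t\<in>T. c t * v t n) = dotd d (\<lambda>n. \<Sum>t\<in>T. c t * v t n) z" by (rule dotd_sym)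
  also have "\<dots> = (\<Sum>t\<in>T. c t * dotd d (v t) z)" by (rule dotd_sum_left)
  also have "\<dots> = (\<Sum>t\<in>T. c t * dotd d z (v t))" by (simp add: dotd_sym)
  finally show ?thesis .
qed

lemma cauchy_schwarz: "\<bar>dotd d x y\<bar> \<le> nrm d x * nrm d y"
proof -
  have "\<bar>dotd d x y\<bar> \<le> (\<Sum>i<d. \<bar>x i\<bar> * \<bar>y i\<bar>)"
    unfolding dotd_def by (rule order_trans[OF sum_abs]) (simp add: abs_mult)
  also have "\<dots> \<le> nrm d x * nrm d y"
    unfolding nrm_L2 by (rule L2_set_mult_ineq)
  finally show ?thesis .
qed

lemma nrm_triangle: "nrm d (\<lambda>n. x n + y n) \<le> nrm d x + nrm d y"
  unfolding nrm_L2 by (rule L2_set_triangle_ineq)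

lemma nrm_scale: "nrm d (\<lambda>n. c * x n) = \<bar>c\<bar> * nrm d x"
proof -
  have "dotd d (\<lambda>n. c * x n) (\<lambda>n. c * x n) = c\<^sup>2 * dotd d x x"
    by (simp add: dotd_scale_left dotd_scale_right power2_eq_square)
  then show ?thesis by (simp add: nrm_def real_sqrt_mult)
qed

lemma nrm_sum:
  assumes "finite C"
  shows "nrm d (\<lambda>n. \<Sum>c\<in>C. f c n) \<le> (\<Sum>c\<in>C. nrm d (f c))"
  using assms
proof (induction C rule: finite_induct)
  case empty
  then show ?case by (simp add: nrm_def dotd_def)
next
  case (insert c C)
  have "nrm d (\<lambda>n. \<Sum>c\<in>insert c C. f c n) = nrm d (\<lambda>n. f c n + (\<Sum>c\<in>C. f c n))"
    using insert by simp
  also have "\<dots> \<le> nrm d (f c) + nrm d (\<lambda>n. \<Sum>c\<in>C. f c n)"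
    using nrm_triangle[of d "f c"] by simp
  also have "\<dots> \<le> nrm d (f c) + (\<Sum>c\<in>C. nrm d (f c))" using insert by simp
  finally show ?case using insert by simp
qed

lemma dotd_zero_self:
  assumes "dotd d x x = 0"
  shows "dotd d x y = 0"
proof -
  have "nrm d x = 0" using assms by (simp add: nrm_def)
  then show ?thesis using cauchy_schwarz[of d x y] by simp
qed

definition isres :: "nat \<Rightarrow> (nat \<Rightarrow> real) set \<Rightarrow> (nat \<Rightarrow> real) \<Rightarrow> ((nat \<Rightarrow> real) \<Rightarrow> real) \<Rightarrow> bool" where
  "isres d T x a \<longleftrightarrow> (\<forall>t\<in>T. dotd d (\<lambda>n. x n - lc T a n) t = 0)"

definition res :: "(nat \<Rightarrow> real) set \<Rightarrow> (nat \<Rightarrow> real) \<Rightarrow> ((nat \<Rightarrow> real) \<Rightarrow> real) \<Rightarrow> nat \<Rightarrow> real" where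
  "res T x a = (\<lambda>n. x n - lc T a n)"

lemma lc_insert:
  assumes "finite T" "t \<notin> T"
  shows "lc (insert t T) a n = a t * t n + lc T a n"
  unfolding lc_def using assms by simp

lemma res_exists:
  assumes "finite T"
  shows "\<exists>a. isres d T x a"
  using assms
proof (induction T arbitrary: x rule: finite_induct)
  case empty
  then show ?case by (simp add: isres_def)
next
  case (insert t T)
  obtain ax where ax: "isres d T x ax" using insert by blast
  obtain bt where bt0: "isres d T t bt" using insert by blast
  define rx where "rx = res T x ax"
  define u where "u = res T t bt"
  have rxT: "\<And>s. s \<in> T \<Longrightarrow> dotd d rx s = 0" using ax unfolding isres_def rx_def res_def by simp
  have uT: "\<And>s. s \<in> T \<Longrightarrow> dotd d u s = 0" using bt0 unfolding isres_def u_def res_def by simp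
  have rx_lc: "\<And>b. dotd d rx (lc T b) = 0" using rxT by (simp add: dotd_lc_right)
  have u_lc: "\<And>b. dotd d u (lc T b) = 0" using uT by (simp add: dotd_lc_right)
  have t_eq: "t = (\<lambda>n. u n + lc T bt n)" unfolding u_def res_def by simp
  show ?case
  proof (cases "dotd d u u = 0")
    case True
    let ?a = "ax(t := 0)"
    have lc1: "lc (insert t T) ?a = lc T ax"
    proof
      fix n
      have "lc (insert t T) ?a n = lc T ?a n" using insert lc_insert[of T t ?a n] by simp
      also have "lc T ?a = lc T ax" unfolding lc_def using insert
        by (intro ext sum.cong) auto
      finally show "lc (insert t T) ?a n = lc T ax n" .
    qed
    have "dotd d rx t = 0"
    proof -
      have "dotd d rx t = dotd d rx u + dotd d rx (lc T bt)"
        by (subst t_eq) (rule dotd_add_right)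
      also have "dotd d rx u = 0" using dotd_zero_self[OF True] dotd_sym by metis
      finally show ?thesis using rx_lc by simp
    qed
    then have "isres d (insert t T) x ?a"
      unfolding isres_def lc1 using rxT unfolding rx_def res_def by auto
    then show ?thesis by blast
  next
    case False
    define mu where "mu = dotd d rx u / dotd d u u"
    let ?a = "\<lambda>s. if s = t then mu else ax s - mu * bt s"
    have lc1: "(\<lambda>n. x n - lc (insert t T) ?a n) = (\<lambda>n. rx n - mu * u n)"
    proof
      fix n
      have "lc (insert t T) ?a n = mu * t n + lc T ?a n" using insert lc_insert[of T t ?a n] by simp
      also have "lc T ?a n = lc T ax n - mu * lc T bt n"
      proof -
        have "lc T ?a n = lc T (\<lambda>s. ax s - mu * bt s) n" unfolding lc_def using insert
          by (intro sum.cong) auto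
        also have "lc T (\<lambda>s. ax s - mu * bt s) n = lc T ax n - mu * lc T bt n"
          unfolding lc_def by (simp add: algebra_simps sum_subtractf sum_distrib_left)
        finally show ?thesis .
      qed
      finally show "x n - lc (insert t T) ?a n = rx n - mu * u n"
        unfolding rx_def u_def res_def by (simp add: algebra_simps)
    qed
    have o1: "dotd d (\<lambda>n. rx n - mu * u n) u = 0"
      using False unfolding dotd_diff_left dotd_scale_left mu_def by (simp add: dotd_sym)
    have o2: "\<And>s. s \<in> T \<Longrightarrow> dotd d (\<lambda>n. rx n - mu * u n) s = 0"
      unfolding dotd_diff_left dotd_scale_left using rxT uT by simp
    have o3: "dotd d (\<lambda>n. rx n - mu * u n) t = 0"
    proof -
      have "dotd d (\<lambda>n. rx n - mu * u n) t = dotd d (\<lambda>n. rx n - mu * u n) u + dotd d (\<lambda>n. rx n - mu * u n) (lc T bt)"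
        by (subst t_eq) (rule dotd_add_right)
      also have "dotd d (\<lambda>n. rx n - mu * u n) (lc T bt) = 0"
        by (simp add: dotd_lc_right o2)
      finally show ?thesis using o1 by simp
    qed
    have "isres d (insert t T) x ?a"
      unfolding isres_def lc1 using o2 o3 by auto
    then show ?thesis by blast
  qed
qed

lemma gram_insert':
  assumes "finite T" "x \<notin> T" "isres d T x a"
  shows "gram_det d (insert x T) = gram_det d T * dotd d (res T x a) (res T x a)"
  using gram_insert[of T x d a] assms unfolding isres_def res_def by simp

lemma gram_nonneg:
  assumes "finite S"
  shows "gram_det d S \<ge> 0"
  using assms
proof (induction S rule: finite_induct)
  case empty
  then show ?case by (simp add: gram_empty)
next
  case (insert x T)
  obtain a where "isres d T x a" using res_exists insert by blast
  then show ?case using insert gram_insert' dotd_nonneg by simp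
qed

lemma res_min:
  assumes "isres d T x a"
  shows "nrm d (res T x a) \<le> nrm d (\<lambda>n. x n - lc T b n)"
proof -
  let ?r = "res T x a"
  let ?z = "lc T (\<lambda>t. a t - b t)"
  have eq: "(\<lambda>n. x n - lc T b n) = (\<lambda>n. ?r n + ?z n)"
    unfolding res_def lc_def by (simp add: sum_subtractf algebra_simps)
  have o: "dotd d ?r ?z = 0"
    using assms unfolding isres_def res_def by (simp add: dotd_lc_right)
  have "dotd d (\<lambda>n. ?r n + ?z n) (\<lambda>n. ?r n + ?z n) = dotd d ?r ?r + dotd d ?z ?z"
    unfolding dotd_add_left dotd_add_right using o by (simp add: dotd_sym)
  then have "dotd d ?r ?r \<le> dotd d (\<lambda>n. x n - lc T b n) (\<lambda>n. x n - lc T b n)"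
    unfolding eq using dotd_nonneg[of d ?z] by simp
  then show ?thesis unfolding nrm_def by simp
qed

lemma steinitz:
  fixes a :: "'c \<Rightarrow> 'h \<Rightarrow> real"
  assumes "finite H" "finite C" "card H < card C"
  shows "\<exists>g. (\<exists>c\<in>C. g c \<noteq> 0) \<and> (\<forall>h\<in>H. (\<Sum>c\<in>C. g c * a c h) = 0)"
  using assms
proof (induction H arbitrary: C a rule: finite_induct)
  case empty
  then obtain c where "c \<in> C" by (metis card.empty card_gt_0_iff ex_in_conv)
  then show ?case by (intro exI[of _ "\<lambda>_. 1"]) auto
next
  case (insert h H)
  show ?case
  proof (cases "\<forall>c\<in>C. a c h = 0")
    case True
    have "card H < card C" using insert by simp
    then obtain g where g: "\<exists>c\<in>C. g c \<noteq> 0" "\<forall>h\<in>H. (\<Sum>c\<in>C. g c * a c h) = 0"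
      using insert.IH[of C a] insert by blast
    then show ?thesis using True by (intro exI[of _ g]) auto
  next
    case False
    then obtain c0 where c0: "c0 \<in> C" "a c0 h \<noteq> 0" by auto
    let ?C = "C - {c0}"
    let ?a = "\<lambda>c h'. a c h' - (a c h / a c0 h) * a c0 h'"
    have "card ?C = card C - 1" using c0 insert by simp
    then have "card H < card ?C" using insert by simp
    moreover have "finite ?C" using insert by simp
    ultimately obtain g where g: "\<exists>c\<in>?C. g c \<noteq> 0" "\<forall>h'\<in>H. (\<Sum>c\<in>?C. g c * ?a c h') = 0"
      using insert.IH[of ?C ?a] by blast
    define g' where "g' = g(c0 := - (\<Sum>c\<in>?C. g c * a c h) / a c0 h)"
    have split: "\<And>f. (\<Sum>c\<in>C. f c) = f c0 + (\<Sum>c\<in>?C. f c)"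
      using c0 insert by (simp add: sum.remove)
    have gC: "\<And>f. (\<Sum>c\<in>?C. g' c * f c) = (\<Sum>c\<in>?C. g c * f c)"
      unfolding g'_def by (rule sum.cong) auto
    have "\<forall>h'\<in>insert h H. (\<Sum>c\<in>C. g' c * a c h') = 0"
    proof
      fix h' assume h': "h' \<in> insert h H"
      have "(\<Sum>c\<in>C. g' c * a c h') = g' c0 * a c0 h' + (\<Sum>c\<in>?C. g c * a c h')"
        by (subst split) (simp add: gC)
      also have "\<dots> = (\<Sum>c\<in>?C. g c * ?a c h')"
      proof -
        have e1: "(\<Sum>c\<in>?C. g c * ?a c h') = (\<Sum>c\<in>?C. g c * a c h') - (\<Sum>c\<in>?C. (g c * a c h) * (a c0 h' / a c0 h))"
          by (simp add: sum_subtractf[symmetric] algebra_simps)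
        have e2: "(\<Sum>c\<in>?C. (g c * a c h) * (a c0 h' / a c0 h)) = (\<Sum>c\<in>?C. g c * a c h) * (a c0 h' / a c0 h)"
          by (rule sum_distrib_right[symmetric])
        show ?thesis unfolding e1 e2 g'_def by simp
      qed
      also have "\<dots> = 0"
      proof (cases "h' = h")
        case True
        then show ?thesis using c0 by simp
      next
        case False
        then show ?thesis using h' g by auto
      qed
      finally show "(\<Sum>c\<in>C. g' c * a c h') = 0" .
    qed
    moreover have "\<exists>c\<in>C. g' c \<noteq> 0" using g unfolding g'_def by auto
    ultimately show ?thesis by blast
  qed
qed


lemma lc_remove:
  assumes "finite C" "c \<in> C"
  shows "lc C a n = a c * c n + lc (C - {c}) a n"
  unfolding lc_def using assms by (simp add: sum.remove)

lemma ulemma: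
  assumes fC: "finite C" and fH: "finite H" and card: "card H < card C"
    and hb: "\<forall>c\<in>C. isres d H c (b c)" and he: "\<forall>c\<in>C. isres d (C - {c}) c (be c)"
    and pos: "\<forall>c\<in>C. dotd d (res (C-{c}) c (be c)) (res (C-{c}) c (be c)) > 0"
  shows "\<exists>c\<in>C. nrm d (res (C-{c}) c (be c)) \<le> real (card C) * nrm d (res H c (b c))"
proof (rule ccontr)
  assume contra: "\<not> ?thesis"
  define e where "e c = res (C-{c}) c (be c)" for c
  define rho where "rho c = res H c (b c)" for c
  obtain g where g0: "\<exists>c\<in>C. g c \<noteq> 0" and gH: "\<forall>h\<in>H. (\<Sum>c\<in>C. g c * b c h) = 0"
    using steinitz[OF fH fC card, of b] by blast
  then obtain c0 where c0: "c0 \<in> C" "g c0 \<noteq> 0" by blast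
  define u where "u = lc C g"
  have u_alt: "u = (\<lambda>n. \<Sum>c\<in>C. g c * rho c n)"
  proof
    fix n
    have "(\<Sum>c\<in>C. g c * rho c n) = (\<Sum>c\<in>C. g c * c n) - (\<Sum>c\<in>C. g c * lc H (b c) n)"
      unfolding rho_def res_def by (simp add: algebra_simps sum_subtractf)
    also have "(\<Sum>c\<in>C. g c * lc H (b c) n) = (\<Sum>h\<in>H. (\<Sum>c\<in>C. g c * b c h) * h n)"
      unfolding lc_def by (simp add: sum_distrib_left sum_distrib_right mult.assoc sum.swap[of _ C])
    also have "\<dots> = 0" using gH by simp
    finally show "u n = (\<Sum>c\<in>C. g c * rho c n)" unfolding u_def lc_def by simp
  qed
  have rhoH: "\<And>c h. c \<in> C \<Longrightarrow> h \<in> H \<Longrightarrow> dotd d (rho c) h = 0"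
    using hb unfolding isres_def rho_def res_def by auto
  have uH: "\<And>h. h \<in> H \<Longrightarrow> dotd d u h = 0"
    unfolding u_alt dotd_sum_left using rhoH by simp
  have u_c: "\<And>c. c \<in> C \<Longrightarrow> dotd d u c = dotd d u (rho c)"
  proof -
    fix c assume c: "c \<in> C"
    have "c = (\<lambda>n. rho c n + lc H (b c) n)" unfolding rho_def res_def by simp
    then have "dotd d u c = dotd d u (rho c) + dotd d u (lc H (b c))"
      by (metis dotd_add_right)
    also have "dotd d u (lc H (b c)) = 0" by (simp add: dotd_lc_right uH)
    finally show "dotd d u c = dotd d u (rho c)" by simp
  qed
  have eC: "\<And>c t. c \<in> C \<Longrightarrow> t \<in> C - {c} \<Longrightarrow> dotd d (e c) t = 0"
    using he unfolding isres_def e_def res_def by auto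
  have u_e: "\<And>c. c \<in> C \<Longrightarrow> dotd d u (e c) = g c * dotd d (e c) (e c)"
  proof -
    fix c assume c: "c \<in> C"
    have "dotd d u (e c) = (\<Sum>t\<in>C. g t * dotd d t (e c))"
      unfolding u_def by (rule dotd_lc_left)
    also have "\<dots> = g c * dotd d c (e c) + (\<Sum>t\<in>C-{c}. g t * dotd d t (e c))"
      using fC c by (simp add: sum.remove)
    also have "(\<Sum>t\<in>C-{c}. g t * dotd d t (e c)) = 0"
      using eC[OF c] by (simp add: dotd_sym)
    also have "dotd d c (e c) = dotd d (e c) (e c)"
    proof -
      have "c = (\<lambda>n. e c n + lc (C-{c}) (be c) n)" unfolding e_def res_def by simp
      then have "dotd d c (e c) = dotd d (e c) (e c) + dotd d (lc (C-{c}) (be c)) (e c)"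
        by (metis dotd_add_left)
      also have "dotd d (lc (C-{c}) (be c)) (e c) = 0"
      proof -
        have "\<forall>t\<in>C-{c}. dotd d t (e c) = 0" using eC[OF c] dotd_sym by metis
        then show ?thesis by (simp add: dotd_lc_left)
      qed
      finally show ?thesis by simp
    qed
    finally show "dotd d u (e c) = g c * dotd d (e c) (e c)" by simp
  qed
  have epos: "\<And>c. c \<in> C \<Longrightarrow> nrm d (e c) > 0"
    using pos unfolding e_def nrm_def by simp
  have gbound: "\<And>c. c \<in> C \<Longrightarrow> \<bar>g c\<bar> * nrm d (e c) \<le> nrm d u"
  proof -
    fix c assume c: "c \<in> C"
    have "\<bar>g c\<bar> * nrm d (e c) * nrm d (e c) = \<bar>dotd d u (e c)\<bar>"
      using u_e[OF c] nrm_sq[of d "e c"] dotd_nonneg[of d "e c"]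
      by (simp add: abs_mult power2_eq_square mult.assoc)
    also have "\<dots> \<le> nrm d u * nrm d (e c)" by (rule cauchy_schwarz)
    finally show "\<bar>g c\<bar> * nrm d (e c) \<le> nrm d u" using epos[OF c] by simp
  qed
  have upos: "nrm d u > 0"
  proof -
    have "dotd d (e c0) (e c0) > 0" using pos c0(1) unfolding e_def by blast
    then have "dotd d u (e c0) \<noteq> 0" using u_e[OF c0(1)] c0 by simp
    then have "dotd d u u \<noteq> 0" using dotd_zero_self by blast
    then show ?thesis using dotd_nonneg[of d u] unfolding nrm_def by simp
  qed
  have "dotd d u u = (\<Sum>c\<in>C. g c * dotd d u c)"
    by (subst (2) u_def) (rule dotd_lc_right)
  also have "\<dots> = (\<Sum>c\<in>C. g c * dotd d u (rho c))"
    using u_c by simp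
  also have "\<dots> \<le> (\<Sum>c\<in>C. \<bar>g c\<bar> * (nrm d u * nrm d (rho c)))"
  proof (rule sum_mono)
    fix c assume "c \<in> C"
    have "g c * dotd d u (rho c) \<le> \<bar>g c\<bar> * \<bar>dotd d u (rho c)\<bar>"
      by (metis abs_ge_self abs_mult)
    also have "\<dots> \<le> \<bar>g c\<bar> * (nrm d u * nrm d (rho c))"
      by (intro mult_left_mono cauchy_schwarz) simp
    finally show "g c * dotd d u (rho c) \<le> \<bar>g c\<bar> * (nrm d u * nrm d (rho c))" .
  qed
  finally have B: "dotd d u u \<le> (\<Sum>c\<in>C. \<bar>g c\<bar> * (nrm d u * nrm d (rho c)))" .
  have A: "real (card C) * dotd d u u \<le> (\<Sum>c\<in>C. \<bar>g c\<bar> * nrm d u * (real (card C) * nrm d (rho c)))"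
  proof -
    have "real (card C) * dotd d u u \<le> real (card C) * (\<Sum>c\<in>C. \<bar>g c\<bar> * (nrm d u * nrm d (rho c)))"
      using B by (intro mult_left_mono) auto
    also have "\<dots> = (\<Sum>c\<in>C. \<bar>g c\<bar> * nrm d u * (real (card C) * nrm d (rho c)))"
      by (simp add: sum_distrib_left algebra_simps)
    finally show ?thesis .
  qed
  have lt: "\<And>c. c \<in> C \<Longrightarrow> real (card C) * nrm d (rho c) < nrm d (e c)"
    using contra unfolding e_def rho_def by force
  have "(\<Sum>c\<in>C. \<bar>g c\<bar> * nrm d u * (real (card C) * nrm d (rho c))) < (\<Sum>c\<in>C. \<bar>g c\<bar> * nrm d u * nrm d (e c))"
  proof (rule sum_strict_mono_ex1[OF fC])
    show "\<forall>c\<in>C. \<bar>g c\<bar> * nrm d u * (real (card C) * nrm d (rho c)) \<le> \<bar>g c\<bar> * nrm d u * nrm d (e c)"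
      using lt upos by (intro ballI mult_left_mono) (auto intro: less_imp_le)
    show "\<exists>c\<in>C. \<bar>g c\<bar> * nrm d u * (real (card C) * nrm d (rho c)) < \<bar>g c\<bar> * nrm d u * nrm d (e c)"
      using lt[OF c0(1)] upos c0 by (intro bexI[OF _ c0(1)] mult_strict_left_mono) auto
  qed
  also have "\<dots> \<le> (\<Sum>c\<in>C. nrm d u * nrm d u)"
  proof (rule sum_mono)
    fix c assume "c \<in> C"
    then show "\<bar>g c\<bar> * nrm d u * nrm d (e c) \<le> nrm d u * nrm d u"
      using gbound[of c] upos by (simp add: mult.commute mult.left_commute mult_left_mono)
  qed
  also have "\<dots> = real (card C) * dotd d u u"
    using nrm_sq[of d u] by (simp add: power2_eq_square)
  finally show False using A by simp
qed


lemma greedy_pow: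
  "(greedy_step d P ^^ n) {} C \<Longrightarrow> C \<subseteq> P \<and> finite C \<and> card C = n"
proof (induction n arbitrary: C)
  case 0
  then show ?case by simp
next
  case (Suc n)
  from Suc.prems obtain C0 where C0: "(greedy_step d P ^^ n) {} C0" "greedy_step d P C0 C"
    by (auto elim: relpowp_Suc_E)
  then have IH: "C0 \<subseteq> P \<and> finite C0 \<and> card C0 = n" using Suc.IH by blast
  from C0(2) obtain p where "p \<in> P - C0" "C = insert p C0" unfolding greedy_step_def by blast
  then show ?case using IH by auto
qed

lemma swap_star:
  assumes "(swap_step d P eps)\<^sup>*\<^sup>* C0 C" "C0 \<subseteq> P" "finite C0"
  shows "C \<subseteq> P \<and> finite C \<and> card C = card C0"
  using assms
proof (induction rule: rtranclp_induct)
  case base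
  then show ?case by simp
next
  case (step C C')
  then have IH: "C \<subseteq> P \<and> finite C \<and> card C = card C0" by blast
  from step(2) obtain q p where qp: "q \<in> P - C" "p \<in> C" "C' = insert q (C - {p})"
    unfolding swap_step_def by blast
  have "card C' = card C"
  proof -
    have "q \<notin> C - {p}" using qp by auto
    then have "card C' = Suc (card (C - {p}))" using qp IH by simp
    also have "\<dots> = card C" by (rule card_Suc_Diff1) (use qp IH in auto)
    finally show ?thesis .
  qed
  then show ?case using qp IH by auto
qed

lemma LS_props:
  assumes "LS_output d P k eps C"
  shows "C \<subseteq> P \<and> finite C \<and> card C = k"
proof -
  obtain C0 where g: "(greedy_step d P ^^ k) {} C0" and s: "(swap_step d P eps)\<^sup>*\<^sup>* C0 C"
    using assms unfolding LS_output_def by blast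
  have "C0 \<subseteq> P \<and> finite C0 \<and> card C0 = k" using greedy_pow[OF g] .
  then show ?thesis using swap_star[OF s] by auto
qed

lemma LS_opt:
  assumes "LS_output d P k eps C" "q \<in> P" "q \<notin> C" "p \<in> C"
  shows "VOL d (insert q (C - {p})) < (1 + eps) * VOL d C"
proof (rule ccontr)
  assume "\<not> ?thesis"
  then have "swap_step d P eps C (insert q (C - {p}))"
    unfolding swap_step_def using assms by auto
  then show False using assms unfolding LS_output_def by blast
qed

lemma LS_zero:
  assumes "LS_output d P k eps C" "k \<ge> 1" "gram_det d C = 0"
  shows "P \<subseteq> C"
proof
  fix q assume q: "q \<in> P"
  show "q \<in> C"
  proof (rule ccontr)
    assume nq: "q \<notin> C"
    have props: "C \<subseteq> P \<and> finite C \<and> card C = k" using LS_props[OF assms(1)] .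
    then obtain p where p: "p \<in> C" using assms(2) by (metis card.empty card_gt_0_iff ex_in_conv less_le_trans zero_less_one)
    have "VOL d (insert q (C - {p})) < (1 + eps) * VOL d C" by (rule LS_opt[OF assms(1) q nq p])
    moreover have "VOL d C = 0" unfolding VOL_def using assms(3) by simp
    moreover have "VOL d (insert q (C - {p})) \<ge> 0"
      unfolding VOL_def using gram_nonneg props by simp
    ultimately show False by simp
  qed
qed


lemma replace:
  assumes eps: "eps > 0" and LS: "LS_output d P k eps C" and k1: "k \<ge> 1" and sP: "s \<in> P"
    and fH: "finite H" and cH: "card H < k" and sa: "isres d H s a"
  shows "\<exists>c\<in>C. \<exists>b. isres d H c b \<and> nrm d (res H s a) \<le> 2 * (1 + eps) * real k * nrm d (res H c b)"
proof -
  have props: "C \<subseteq> P" "finite C" "card C = k" using LS_props[OF LS] by auto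
  have fac: "1 \<le> 2 * (1 + eps) * real k"
  proof -
    have "1 \<le> 2 * (1 + eps)" using eps by simp
    also have "\<dots> \<le> 2 * (1 + eps) * real k" using k1 eps by simp
    finally show ?thesis .
  qed
  show ?thesis
  proof (cases "s \<in> C \<or> gram_det d C = 0")
    case True
    then have sC: "s \<in> C" using LS_zero[OF LS k1] sP by blast
    have "nrm d (res H s a) \<le> 2 * (1 + eps) * real k * nrm d (res H s a)"
      using fac nrm_nonneg[of d "res H s a"] by (simp add: mult_le_cancel_right1)
    then show ?thesis using sC sa by blast
  next
    case False
    then have sC: "s \<notin> C" and Gpos: "gram_det d C > 0"
      using gram_nonneg[OF props(2), of d] by auto
    obtain al where al: "isres d C s al" using res_exists[OF props(2)] by blast
    define r where "r = res C s al"
    have rC: "\<And>t. t \<in> C \<Longrightarrow> dotd d r t = 0" using al unfolding isres_def r_def res_def by simp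
    have "\<forall>c. \<exists>b. isres d (C - {c}) c b" using res_exists props(2) by blast
    then obtain be where be: "\<And>c. isres d (C - {c}) c (be c)" by metis
    have "\<forall>c. \<exists>b. isres d H c b" using res_exists fH by blast
    then obtain bh where bh: "\<And>c. isres d H c (bh c)" by metis
    define e where "e c = res (C - {c}) c (be c)" for c
    define rho where "rho c = res H c (bh c)" for c
    have GC: "\<And>c. c \<in> C \<Longrightarrow> gram_det d C = gram_det d (C - {c}) * dotd d (e c) (e c)"
    proof -
      fix c assume c: "c \<in> C"
      have "gram_det d (insert c (C - {c})) = gram_det d (C - {c}) * dotd d (e c) (e c)"
        unfolding e_def using props(2) be by (intro gram_insert') auto
      then show "gram_det d C = gram_det d (C - {c}) * dotd d (e c) (e c)"
        using c by (simp add: insert_absorb)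
    qed
    have Gc_pos: "\<And>c. c \<in> C \<Longrightarrow> gram_det d (C - {c}) > 0 \<and> dotd d (e c) (e c) > 0"
    proof -
      fix c assume c: "c \<in> C"
      have "gram_det d (C - {c}) \<ge> 0" using gram_nonneg props(2) by simp
      moreover have "dotd d (e c) (e c) \<ge> 0" by (rule dotd_nonneg)
      ultimately show "gram_det d (C - {c}) > 0 \<and> dotd d (e c) (e c) > 0"
        using GC[OF c] Gpos by (metis less_eq_real_def mult_eq_0_iff)
    qed
    have eC: "\<And>c t. t \<in> C - {c} \<Longrightarrow> dotd d (e c) t = 0"
      using be unfolding isres_def e_def res_def by auto
    have er: "\<And>c. c \<in> C \<Longrightarrow> dotd d (e c) r = 0"
    proof -
      fix c assume c: "c \<in> C"
      have "e c = (\<lambda>n. c n - lc (C - {c}) (be c) n)" unfolding e_def res_def by simp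
      then have "dotd d r (e c) = dotd d r c - dotd d r (lc (C - {c}) (be c))"
        by (metis dotd_diff_right)
      also have "\<dots> = 0" using rC c by (simp add: dotd_lc_right)
      finally show "dotd d (e c) r = 0" by (simp add: dotd_sym)
    qed
    have bnd: "\<And>c. c \<in> C \<Longrightarrow> (al c)\<^sup>2 * dotd d (e c) (e c) + dotd d r r < (1 + eps)\<^sup>2 * dotd d (e c) (e c)"
    proof -
      fix c assume c: "c \<in> C"
      define v where "v = (\<lambda>n. al c * e c n + r n)"
      define ga where "ga t = al t + al c * be c t" for t
      have v_eq: "(\<lambda>n. s n - lc (C - {c}) ga n) = v"
      proof
        fix n
        have "lc C al n = al c * c n + lc (C - {c}) al n" by (rule lc_remove[OF props(2) c])
        moreover have "lc (C - {c}) ga n = lc (C - {c}) al n + al c * lc (C - {c}) (be c) n"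
          unfolding lc_def ga_def by (simp add: algebra_simps sum.distrib sum_distrib_left)
        ultimately show "s n - lc (C - {c}) ga n = v n"
          unfolding v_def e_def r_def res_def by (simp add: algebra_simps)
      qed
      have vres: "isres d (C - {c}) s ga"
        unfolding isres_def v_eq
      proof
        fix t assume t: "t \<in> C - {c}"
        show "dotd d v t = 0" unfolding v_def dotd_add_left dotd_scale_left
          using eC[OF t] rC t by simp
      qed
      have G': "gram_det d (insert s (C - {c})) = gram_det d (C - {c}) * dotd d v v"
        using gram_insert'[of "C - {c}" s d ga] vres props(2) sC v_eq unfolding res_def by simp
      have "VOL d (insert s (C - {c})) < (1 + eps) * VOL d C"
        by (rule LS_opt[OF LS sP sC c])
      also have "(1 + eps) * VOL d C = sqrt ((1 + eps)\<^sup>2 * gram_det d C)"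
        unfolding VOL_def using eps by (simp add: real_sqrt_mult)
      finally have "gram_det d (insert s (C - {c})) < (1 + eps)\<^sup>2 * gram_det d C"
        unfolding VOL_def by simp
      then have "gram_det d (C - {c}) * dotd d v v < gram_det d (C - {c}) * ((1 + eps)\<^sup>2 * dotd d (e c) (e c))"
        unfolding G' GC[OF c] by (simp add: algebra_simps)
      then have vv: "dotd d v v < (1 + eps)\<^sup>2 * dotd d (e c) (e c)"
        using Gc_pos[OF c] by simp
      have "dotd d v v = (al c)\<^sup>2 * dotd d (e c) (e c) + dotd d r r"
        unfolding v_def dotd_add_left dotd_add_right dotd_scale_left dotd_scale_right
        using er[OF c] by (simp add: dotd_sym[of d r "e c"] power2_eq_square)
      then show "(al c)\<^sup>2 * dotd d (e c) (e c) + dotd d r r < (1 + eps)\<^sup>2 * dotd d (e c) (e c)"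
        using vv by simp
    qed
    have alb: "\<And>c. c \<in> C \<Longrightarrow> \<bar>al c\<bar> \<le> 1 + eps"
    proof -
      fix c assume c: "c \<in> C"
      have "(al c)\<^sup>2 * dotd d (e c) (e c) < (1 + eps)\<^sup>2 * dotd d (e c) (e c)"
        using bnd[OF c] dotd_nonneg[of d r] by simp
      then have "(al c)\<^sup>2 < (1 + eps)\<^sup>2" using Gc_pos[OF c] by simp
      then have "\<bar>al c\<bar>\<^sup>2 < (1 + eps)\<^sup>2" by simp
      then show "\<bar>al c\<bar> \<le> 1 + eps" using eps
        using power_less_imp_less_base[of "\<bar>al c\<bar>" 2 "1 + eps"] by simp
    qed
    have rb: "\<And>c. c \<in> C \<Longrightarrow> nrm d r \<le> (1 + eps) * nrm d (e c)"
    proof -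
      fix c assume c: "c \<in> C"
      have "dotd d r r \<le> (1 + eps)\<^sup>2 * dotd d (e c) (e c)"
        using bnd[OF c] Gc_pos[OF c] by (smt (verit) zero_le_power2 mult_nonneg_nonneg)
      then have "sqrt (dotd d r r) \<le> sqrt ((1 + eps)\<^sup>2 * dotd d (e c) (e c))"
        by (rule real_sqrt_le_mono)
      then show "nrm d r \<le> (1 + eps) * nrm d (e c)"
        unfolding nrm_def using eps by (simp add: real_sqrt_mult)
    qed
    have kpos: "card H < card C" using cH props(3) by simp
    obtain c1 where c1: "c1 \<in> C" "nrm d (e c1) \<le> real (card C) * nrm d (rho c1)"
      using ulemma[OF props(2) fH kpos, of d bh be] bh be Gc_pos
      unfolding e_def rho_def by blast
    have Cne: "C \<noteq> {}" using c1 by blast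
    obtain cs where cs: "cs \<in> C" "\<And>c. c \<in> C \<Longrightarrow> nrm d (rho c) \<le> nrm d (rho cs)"
    proof -
      have "Max ((\<lambda>c. nrm d (rho c)) ` C) \<in> (\<lambda>c. nrm d (rho c)) ` C"
        using props(2) Cne by (intro Max_in) auto
      then obtain cs where "cs \<in> C" "nrm d (rho cs) = Max ((\<lambda>c. nrm d (rho c)) ` C)" by auto
      moreover have "\<And>c. c \<in> C \<Longrightarrow> nrm d (rho c) \<le> Max ((\<lambda>c. nrm d (rho c)) ` C)"
        using props(2) by (intro Max_ge) auto
      ultimately show ?thesis using that by metis
    qed
    define gm where "gm h = (\<Sum>c\<in>C. al c * bh c h)" for h
    have seq: "(\<lambda>n. s n - lc H gm n) = (\<lambda>n. (\<Sum>c\<in>C. al c * rho c n) + r n)"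
    proof
      fix n
      have "(\<Sum>c\<in>C. al c * rho c n) = lc C al n - (\<Sum>c\<in>C. al c * lc H (bh c) n)"
        unfolding rho_def res_def lc_def by (simp add: algebra_simps sum_subtractf)
      also have "(\<Sum>c\<in>C. al c * lc H (bh c) n) = lc H gm n"
        unfolding lc_def gm_def by (simp add: sum_distrib_left sum_distrib_right mult.assoc sum.swap[of _ C])
      finally show "s n - lc H gm n = (\<Sum>c\<in>C. al c * rho c n) + r n"
        unfolding r_def res_def by simp
    qed
    have "nrm d (res H s a) \<le> nrm d (\<lambda>n. s n - lc H gm n)" by (rule res_min[OF sa])
    also have "\<dots> \<le> nrm d (\<lambda>n. \<Sum>c\<in>C. al c * rho c n) + nrm d r"
      unfolding seq by (rule nrm_triangle)
    also have "nrm d (\<lambda>n. \<Sum>c\<in>C. al c * rho c n) \<le> (\<Sum>c\<in>C. nrm d (\<lambda>n. al c * rho c n))"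
      by (rule nrm_sum[OF props(2)])
    also have "\<dots> = (\<Sum>c\<in>C. \<bar>al c\<bar> * nrm d (rho c))" by (simp add: nrm_scale)
    also have "\<dots> \<le> (\<Sum>c\<in>C. (1 + eps) * nrm d (rho cs))"
    proof (rule sum_mono)
      fix c assume c: "c \<in> C"
      show "\<bar>al c\<bar> * nrm d (rho c) \<le> (1 + eps) * nrm d (rho cs)"
        using alb[OF c] cs(2)[OF c] nrm_nonneg[of d "rho c"] eps
        by (intro mult_mono) auto
    qed
    also have "\<dots> = real k * (1 + eps) * nrm d (rho cs)" using props(3) by simp
    also have "nrm d r \<le> (1 + eps) * (real (card C) * nrm d (rho c1))"
      using rb[OF c1(1)] c1(2) eps by (smt (verit) mult_left_mono)
    also have "\<dots> \<le> (1 + eps) * (real k * nrm d (rho cs))"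
      using cs(2)[OF c1(1)] props(3) eps by (simp add: mult_left_mono)
    finally have "nrm d (res H s a) \<le> 2 * (1 + eps) * real k * nrm d (rho cs)"
      by (simp add: algebra_simps)
    then show ?thesis using cs(1) bh unfolding rho_def by blast
  qed
qed


lemma res_zero_if_in:
  assumes "isres d H c b" "c \<in> H"
  shows "nrm d (res H c b) = 0"
proof -
  let ?r = "res H c b"
  have rH: "\<And>h. h \<in> H \<Longrightarrow> dotd d ?r h = 0" using assms(1) unfolding isres_def res_def by simp
  have "c = (\<lambda>n. ?r n + lc H b n)" unfolding res_def by simp
  then have "dotd d ?r c = dotd d ?r ?r + dotd d ?r (lc H b)" by (metis dotd_add_right)
  moreover have "dotd d ?r (lc H b) = 0" using rH by (simp add: dotd_lc_right)
  ultimately have "dotd d ?r ?r = 0" using rH[OF assms(2)] by simp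
  then show ?thesis unfolding nrm_def by simp
qed

lemma iterate:
  fixes m :: nat
  assumes eps: "eps > 0" and k1: "k \<ge> 1" and m1: "m \<ge> 1"
    and hyps: "\<forall>i<m. finite (Ps i) \<and> LS_output d (Ps i) k eps (Cs i)"
  shows "\<forall>S. S \<subseteq> (\<Union>i<m. Ps i) \<and> card S = k \<and> card (S - (\<Union>i<m. Cs i)) \<le> n \<longrightarrow>
     (\<exists>T. T \<subseteq> (\<Union>i<m. Cs i) \<and> card T = k \<and> gram_det d S \<le> gram_det d T * (2 * (1 + eps) * real k) ^ (2 * n))"
proof (induction n)
  let ?V = "\<Union>i<m. Cs i"
  let ?K = "2 * (1 + eps) * real k"
  case 0
  show ?case
  proof (intro allI impI)
    fix S assume S: "S \<subseteq> (\<Union>i<m. Ps i) \<and> card S = k \<and> card (S - ?V) \<le> 0"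
    then have fS: "finite S" using k1 by (metis card.infinite not_one_le_zero)
    then have "S - ?V = {}" using S by simp
    then have "S \<subseteq> ?V" by blast
    then show "\<exists>T. T \<subseteq> ?V \<and> card T = k \<and> gram_det d S \<le> gram_det d T * ?K ^ (2 * 0)"
      using S by auto
  qed
next
  let ?V = "\<Union>i<m. Cs i"
  let ?U = "\<Union>i<m. Ps i"
  let ?K = "2 * (1 + eps) * real k"
  case (Suc n)
  have K1: "?K \<ge> 1"
  proof -
    have "1 \<le> 2 * (1 + eps)" using eps by simp
    also have "\<dots> \<le> 2 * (1 + eps) * real k" using k1 eps by simp
    finally show ?thesis .
  qed
  have m0: "0 < m" using m1 by simp
  have C0: "Cs 0 \<subseteq> ?V" "card (Cs 0) = k" "finite (Cs 0)"
    using hyps m0 LS_props[of d "Ps 0" k eps "Cs 0"] by auto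
  show ?case
  proof (intro allI impI)
    fix S assume S: "S \<subseteq> ?U \<and> card S = k \<and> card (S - ?V) \<le> Suc n"
    then have fS: "finite S" using k1 by (metis card.infinite not_one_le_zero)
    show "\<exists>T. T \<subseteq> ?V \<and> card T = k \<and> gram_det d S \<le> gram_det d T * ?K ^ (2 * Suc n)"
    proof (cases "card (S - ?V) \<le> n")
      case True
      then obtain T where T: "T \<subseteq> ?V" "card T = k" "gram_det d S \<le> gram_det d T * ?K ^ (2 * n)"
        using Suc.IH S True by blast
      have fT: "finite T" using T(2) k1 by (metis card.infinite not_one_le_zero)
      have "gram_det d T * ?K ^ (2 * n) \<le> gram_det d T * ?K ^ (2 * Suc n)"
        using gram_nonneg[OF fT, of d] K1 by (intro mult_left_mono power_increasing) auto
      then have "gram_det d S \<le> gram_det d T * ?K ^ (2 * Suc n)" using T(3) by linarith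
      then show ?thesis using T(1,2) by blast
    next
      case False
      then have cardSV: "card (S - ?V) = Suc n" using S by simp
      then have "S - ?V \<noteq> {}" by (metis card.empty Zero_not_Suc)
      then obtain s where s: "s \<in> S" "s \<notin> ?V" by blast
      show ?thesis
      proof (cases "gram_det d S > 0")
        case False
        then have "gram_det d S \<le> gram_det d (Cs 0) * ?K ^ (2 * Suc n)"
          using gram_nonneg[OF C0(3), of d] K1 by (smt (verit) mult_nonneg_nonneg zero_le_power)
        then show ?thesis using C0 by blast
      next
        case True
        from s S obtain i where i: "i < m" "s \<in> Ps i" by blast
        have sCi: "s \<notin> Cs i" using s i by blast
        define H where "H = S - {s}"
        have fH: "finite H" using fS H_def by simp
        have cH: "card H = k - 1" using H_def s fS S by simp
        have cHk: "card H < k" using cH k1 by simp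
        obtain a where a: "isres d H s a" using res_exists[OF fH] by blast
        have sH: "s \<notin> H" "insert s H = S" using H_def s by auto
        have GS: "gram_det d S = gram_det d H * dotd d (res H s a) (res H s a)"
          using gram_insert'[OF fH sH(1) a] sH(2) by simp
        obtain c b where c: "c \<in> Cs i" "isres d H c b"
          and cb: "nrm d (res H s a) \<le> ?K * nrm d (res H c b)"
          using replace[OF eps _ k1 i(2) fH cHk a] hyps i by blast
        have cH: "c \<notin> H"
        proof
          assume "c \<in> H"
          then have "nrm d (res H c b) = 0" by (rule res_zero_if_in[OF c(2)])
          then have "nrm d (res H s a) = 0" using cb nrm_nonneg[of d "res H s a"] by simp
          then have "dotd d (res H s a) (res H s a) = 0" using nrm_sq[of d "res H s a"] by simp
          then show False using GS True by simp
        qed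
        define S' where "S' = insert c H"
        have cV: "c \<in> ?V" using c i by blast
        have "Cs i \<subseteq> Ps i" using LS_props[of d "Ps i" k eps "Cs i"] hyps i by simp
        then have "c \<in> ?U" using c i by blast
        moreover have "H \<subseteq> ?U" using S unfolding H_def by blast
        ultimately have S'U: "S' \<subseteq> ?U" unfolding S'_def by blast
        have cS': "card S' = k" unfolding S'_def using cH fH cH k1
          by (simp add: \<open>card H = k - 1\<close>)
        have "S' - ?V = (S - ?V) - {s}" unfolding S'_def H_def using cV by auto
        then have "card (S' - ?V) = n" using cardSV s fS by simp
        then obtain T where T: "T \<subseteq> ?V" "card T = k" "gram_det d S' \<le> gram_det d T * ?K ^ (2 * n)"
          using Suc.IH S'U cS' by blast
        have GS': "gram_det d S' = gram_det d H * dotd d (res H c b) (res H c b)"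
          unfolding S'_def by (rule gram_insert'[OF fH cH c(2)])
        have "dotd d (res H s a) (res H s a) \<le> ?K ^ 2 * dotd d (res H c b) (res H c b)"
        proof -
          have "(nrm d (res H s a))\<^sup>2 \<le> (?K * nrm d (res H c b))\<^sup>2"
            using cb nrm_nonneg by (intro power_mono) auto
          then show ?thesis unfolding nrm_sq power_mult_distrib .
        qed
        then have "gram_det d H * dotd d (res H s a) (res H s a) \<le> gram_det d H * (?K ^ 2 * dotd d (res H c b) (res H c b))"
          using gram_nonneg[OF fH, of d] by (rule mult_left_mono)
        then have "gram_det d S \<le> ?K ^ 2 * gram_det d S'"
          unfolding GS GS' by (simp only: mult.left_commute)
        also have "\<dots> \<le> ?K ^ 2 * (gram_det d T * ?K ^ (2 * n))"
          using T(3) K1 by (intro mult_left_mono) auto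
        also have "\<dots> = gram_det d T * ?K ^ (2 * Suc n)"
          by (simp add: power_add[symmetric] algebra_simps)
        finally show ?thesis using T by blast
      qed
    qed
  qed
qed


theorem theorem1p2:
  fixes eps :: real
  assumes "eps > 0"
  shows "\<exists>A>0. \<forall>k d. 1 \<le> k \<and> k \<le> d \<longrightarrow>
    (\<forall>P C. finite P \<and> P \<subseteq> Rd d \<and> LS_output d P k eps C \<longrightarrow> card C \<le> k) \<and>
    (\<forall>m::nat. m \<ge> 1 \<longrightarrow> (\<forall>Ps Cs.
       (\<forall>i<m. finite (Ps i) \<and> Ps i \<subseteq> Rd d \<and> LS_output d (Ps i) k eps (Cs i)) \<longrightarrow>
       MAXDET d k (\<Union>i<m. Cs i) \<ge> MAXDET d k (\<Union>i<m. Ps i) / (A * real k) ^ (2 * k)))"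
proof (intro exI[of _ "2 * (1 + eps)"] conjI allI impI)
  show "0 < 2 * (1 + eps)" using assms by simp
next
  fix k d P C
  assume "1 \<le> k \<and> k \<le> d" "finite P \<and> P \<subseteq> Rd d \<and> LS_output d P k eps C"
  then have "LS_output d P k eps C" by simp
  then show "card C \<le> k" using LS_props by (metis order_refl)
next
  fix k d :: nat and m :: nat and Ps Cs
  assume kd: "1 \<le> k \<and> k \<le> d" and m1: "1 \<le> m"
    and H: "\<forall>i<m. finite (Ps i) \<and> Ps i \<subseteq> Rd d \<and> LS_output d (Ps i) k eps (Cs i)"
  let ?U = "\<Union>i<m. Ps i"
  let ?V = "\<Union>i<m. Cs i"
  let ?K = "2 * (1 + eps) * real k"
  have k1: "k \<ge> 1" using kd by simp
  have hyps: "\<forall>i<m. finite (Ps i) \<and> LS_output d (Ps i) k eps (Cs i)" using H by simp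
  have K1: "?K \<ge> 1"
  proof -
    have "1 \<le> 2 * (1 + eps)" using assms by simp
    also have "\<dots> \<le> 2 * (1 + eps) * real k" using k1 assms by simp
    finally show ?thesis .
  qed
  have Kpos: "?K ^ (2 * k) > 0" using K1 by simp
  have fU: "finite ?U" using hyps by simp
  have CP: "\<And>i. i < m \<Longrightarrow> Cs i \<subseteq> Ps i" using hyps LS_props by blast
  have VU: "?V \<subseteq> ?U" using CP by blast
  have fV: "finite ?V" using finite_subset[OF VU fU] .
  have m0: "0 < m" using m1 by simp
  have C0: "Cs 0 \<subseteq> ?V" "card (Cs 0) = k" "finite (Cs 0)"
    using hyps m0 LS_props[of d "Ps 0" k eps "Cs 0"] by auto
  have finsets: "\<And>X. finite X \<Longrightarrow> finite {gram_det d S | S. S \<subseteq> X \<and> card S = k}"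
  proof -
    fix X :: "(nat \<Rightarrow> real) set" assume "finite X"
    then have "finite (Pow X)" by simp
    then have "finite ((gram_det d) ` {S. S \<subseteq> X \<and> card S = k})"
      by (intro finite_imageI) (auto intro: finite_subset)
    moreover have "{gram_det d S | S. S \<subseteq> X \<and> card S = k} = (gram_det d) ` {S. S \<subseteq> X \<and> card S = k}"
      by auto
    ultimately show "finite {gram_det d S | S. S \<subseteq> X \<and> card S = k}" by simp
  qed
  have MV: "\<And>T. T \<subseteq> ?V \<Longrightarrow> card T = k \<Longrightarrow> gram_det d T \<le> MAXDET d k ?V"
  proof -
    fix T assume T: "T \<subseteq> ?V" "card T = k"
    then have "MAXDET d k ?V = Max {gram_det d S | S. S \<subseteq> ?V \<and> card S = k}"
      unfolding MAXDET_def by auto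
    moreover have "gram_det d T \<le> Max {gram_det d S | S. S \<subseteq> ?V \<and> card S = k}"
      using T finsets[OF fV] by (intro Max_ge) auto
    ultimately show "gram_det d T \<le> MAXDET d k ?V" by simp
  qed
  have MV0: "MAXDET d k ?V \<ge> 0"
    using MV[OF C0(1,2)] gram_nonneg[OF C0(3), of d] by simp
  show "MAXDET d k ?U / ?K ^ (2 * k) \<le> MAXDET d k ?V"
  proof (cases "\<exists>S. S \<subseteq> ?U \<and> card S = k")
    case False
    then have "MAXDET d k ?U = 0" unfolding MAXDET_def by (simp only: if_False)
    then show ?thesis using MV0 by simp
  next
    case True
    then have "MAXDET d k ?U = Max {gram_det d S | S. S \<subseteq> ?U \<and> card S = k}"
      unfolding MAXDET_def by simp
    moreover have "Max {gram_det d S | S. S \<subseteq> ?U \<and> card S = k} \<in> {gram_det d S | S. S \<subseteq> ?U \<and> card S = k}"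
      using True finsets[OF fU] by (intro Max_in) auto
    ultimately obtain S where S: "S \<subseteq> ?U" "card S = k" "MAXDET d k ?U = gram_det d S" by auto
    have fS: "finite S" using finite_subset[OF S(1) fU] .
    have "card (S - ?V) \<le> k" using S(2) fS by (metis card_Diff_subset card_mono Diff_subset order.trans order_refl)
    then obtain T where T: "T \<subseteq> ?V" "card T = k" "gram_det d S \<le> gram_det d T * ?K ^ (2 * k)"
      using iterate[OF assms k1 m1 hyps, of k] S by blast
    have "MAXDET d k ?U / ?K ^ (2 * k) \<le> gram_det d T"
      using T(3) S(3) Kpos by (simp add: divide_le_eq)
    also have "\<dots> \<le> MAXDET d k ?V" by (rule MV[OF T(1,2)])
    finally show ?thesis .
  qed
qed

end
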